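(* Let $A=(i_1,\dots,i_{a-1},k)$ and $B=(k,j_2,\dots,j_b)$ be ordered tuples of distinct elements of $I_d$ whose underlying sets intersect exactly in $\{k\}$. Let $\alpha\in\mathbb{Z}_2^{a,\mathrm{ev}}$, $\beta\in\mathbb{Z}_2^{b,\mathrm{ev}}$ and $r,s\ge0$. Let $A\cup B=(i_1,\dots,i_{a-1},k,j_2,\dots,j_b)$. Then in $R_l[x_1,\dots,x_d]$, $$h^\alpha_r(A)\,h^\beta_s(B)=(-1)^{\alpha_a((b-1)(l-1)+s)}\,h^\gamma_{r+s}(A\cup B),$$ where $\gamma=(\alpha_1,\dots,\alpha_{a-1},\beta_1,\dots,\beta_{b-1},\beta_b+\alpha_a)\in\mathbb{Z}_2^{a+b-1,\mathrm{ev}}$.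
   Context: $l,d\ge1$, $R$ a commutative ring, $I_a=\{1,\dots,a\}$, $R_l[x_1,\dots,x_d]=R[x_1,\dots,x_d]/(x_1^l,\dots,x_d^l)$. For $\alpha\in\mathbb{Z}_2^a$, $|\alpha|=\sum_j\alpha_j$, $\mathbb{Z}_2^{a,\mathrm{ev}}$ is the set of $\alpha$ with $|\alpha|$ even, and $\epsilon^\alpha_j=\prod_{k<j}(-1)^{\alpha_k}$ (so $\epsilon^\alpha_1=1$). For an ordered tuple $A=(i_1,\dots,i_a)$ of distinct elements of $I_d$, $r\ge0$ and $\alpha\in\mathbb{Z}_2^{a,\mathrm{ev}}$, $h^\alpha_r(A)=\sum_{r_1+\dots+r_a=(a-1)(l-1)+r,\ r_j\ge0}\prod_{j=1}^a(\epsilon^\alpha_jx_{i_j})^{r_j}$. *)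

theory Defs
  imports Main "HOL-Library.Poly_Mapping"
begin

type_synonym 'a mpoly = "(nat \<Rightarrow>\<^sub>0 nat) \<Rightarrow>\<^sub>0 'a"

definition Var :: "nat \<Rightarrow> 'a::comm_ring_1 mpoly" where
  "Var i = Poly_Mapping.single (Poly_Mapping.single i 1) 1"

text \<open>Equality in R_l[x_1..x_d] = R[x_1..x_d]/(x_1^l,...,x_d^l): the difference lies in the
  ideal generated by x_1^l, ..., x_d^l.\<close>
definition trunc_eq :: "nat \<Rightarrow> nat \<Rightarrow> 'a::comm_ring_1 mpoly \<Rightarrow> 'a mpoly \<Rightarrow> bool" where
  "trunc_eq l d p q \<longleftrightarrow> (\<exists>c :: nat \<Rightarrow> 'a mpoly. p - q = (\<Sum>i\<in>{1..d}. c i * Var i ^ l))"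

text \<open>Elements of Z_2^a as lists of 0/1 naturals (0-indexed).\<close>
definition Z2vec :: "nat \<Rightarrow> nat list \<Rightarrow> bool" where
  "Z2vec a \<alpha> \<longleftrightarrow> length \<alpha> = a \<and> (\<forall>x\<in>set \<alpha>. x < 2)"

definition Z2ev :: "nat \<Rightarrow> nat list \<Rightarrow> bool" where
  "Z2ev a \<alpha> \<longleftrightarrow> Z2vec a \<alpha> \<and> even (sum_list \<alpha>)"

text \<open>eps \<alpha> j = prod_{k<j} (-1)^{alpha_k} (0-indexed j, so eps \<alpha> 0 = 1).\<close>
definition eps :: "nat list \<Rightarrow> nat \<Rightarrow> 'a::comm_ring_1" where
  "eps \<alpha> j = (\<Prod>k<j. (-1) ^ (\<alpha> ! k))"

definition hpoly :: "nat \<Rightarrow> nat list \<Rightarrow> nat \<Rightarrow> nat list \<Rightarrow> 'a::comm_ring_1 mpoly" where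
  "hpoly l \<alpha> r A =
     (\<Sum>rs\<in>{rs. length rs = length A \<and> sum_list rs = (length A - 1) * (l - 1) + r}.
        \<Prod>j<length A. (Poly_Mapping.single 0 (eps \<alpha> j) * Var (A ! j)) ^ (rs ! j))"

end

theory Submission imports Defs begin


lemma prod_lessThan_add: "(\<Prod>j<n+m. g j) = (\<Prod>j<n. g j) * (\<Prod>i<m. g (n+i))"
  for g :: "nat \<Rightarrow> 'b::comm_monoid_mult"
  by (induction m) (auto simp: ac_simps)

lemma single0_power: "(Poly_Mapping.single 0 c :: 'a::comm_ring_1 mpoly) ^ n = Poly_Mapping.single 0 (c ^ n)"
  by (induction n) (auto simp: mult_single)

lemma single0_mult: "(Poly_Mapping.single 0 a :: 'a::comm_ring_1 mpoly) * Poly_Mapping.single 0 b = Poly_Mapping.single 0 (a*b)"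
  by (simp add: mult_single)

definition inJ :: "nat \<Rightarrow> nat \<Rightarrow> 'a::comm_ring_1 mpoly \<Rightarrow> bool" where
  "inJ l d p \<longleftrightarrow> (\<exists>c :: nat \<Rightarrow> 'a mpoly. p = (\<Sum>i\<in>{1..d}. c i * Var i ^ l))"

lemma inJ_0: "inJ l d 0"
  unfolding inJ_def by (rule exI[of _ "\<lambda>_. 0"]) simp

lemma inJ_add: "inJ l d p \<Longrightarrow> inJ l d q \<Longrightarrow> inJ l d (p + q)"
  unfolding inJ_def
proof (elim exE)
  fix c1 c2 assume "p = (\<Sum>i\<in>{1..d}. c1 i * Var i ^ l)" "q = (\<Sum>i\<in>{1..d}. c2 i * Var i ^ l)"
  then show "\<exists>c. p + q = (\<Sum>i\<in>{1..d}. c i * Var i ^ l)"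
    by (intro exI[of _ "\<lambda>i. c1 i + c2 i"]) (simp add: sum.distrib distrib_right)
qed

lemma inJ_mult: "inJ l d p \<Longrightarrow> inJ l d (q * p)"
  unfolding inJ_def
proof (elim exE)
  fix c assume "p = (\<Sum>i\<in>{1..d}. c i * Var i ^ l)"
  then show "\<exists>c. q * p = (\<Sum>i\<in>{1..d}. c i * Var i ^ l)"
    by (intro exI[of _ "\<lambda>i. q * c i"]) (simp add: sum_distrib_left mult.assoc)
qed

lemma inJ_sum: "finite S \<Longrightarrow> (\<And>x. x \<in> S \<Longrightarrow> inJ l d (f x)) \<Longrightarrow> inJ l d (sum f S)"
  by (induction S rule: finite_induct) (auto intro: inJ_0 inJ_add)

lemma inJ_Var: assumes i: "i \<in> {1..d}" shows "inJ l d (q * Var i ^ l)"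
  unfolding inJ_def
proof (rule exI[of _ "\<lambda>j. if j = i then q else 0"])
  have "(\<Sum>j\<in>{1..d}. (if j = i then q else 0) * Var j ^ l) = (\<Sum>j\<in>{1..d}. if j = i then q * Var j ^ l else 0)"
    by (rule sum.cong) auto
  also have "\<dots> = q * Var i ^ l" using i by (simp add: sum.delta)
  finally show "q * Var i ^ l = (\<Sum>j\<in>{1..d}. (if j = i then q else 0) * Var j ^ l)" by simp
qed

definition T :: "nat list \<Rightarrow> nat list \<Rightarrow> nat list \<Rightarrow> 'a::comm_ring_1 mpoly" where
  "T \<alpha> A rs = (\<Prod>j<length A. (Poly_Mapping.single 0 (eps \<alpha> j) * Var (A ! j)) ^ (rs ! j))"

lemma T_inJ:
  assumes "j < length A" "rs ! j \<ge> l" "set A \<subseteq> {1..d}"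
  shows "inJ l d (T \<alpha> A rs)"
proof -
  let ?f = "\<lambda>j. (Poly_Mapping.single 0 (eps \<alpha> j) * Var (A ! j)) ^ (rs ! j) :: 'a mpoly"
  have "T \<alpha> A rs = ?f j * (\<Prod>i\<in>{..<length A} - {j}. ?f i)"
    unfolding T_def using assms(1) by (subst prod.remove[of _ j]) auto
  also have "?f j = ((Poly_Mapping.single 0 (eps \<alpha> j) * Var (A ! j)) ^ (rs ! j - l) * Poly_Mapping.single 0 (eps \<alpha> j) ^ l) * Var (A ! j) ^ l"
  proof -
    obtain e where e: "rs ! j = l + e" using assms(2) le_Suc_ex by blast
    have e2: "rs ! j - l = e" using e by simp
    show ?thesis unfolding e2 unfolding e power_add power_mult_distrib by (simp only: ac_simps)
  qed
  finally have Teq: "T \<alpha> A rs = (((Poly_Mapping.single 0 (eps \<alpha> j) * Var (A ! j)) ^ (rs ! j - l) * Poly_Mapping.single 0 (eps \<alpha> j) ^ l) * (\<Prod>i\<in>{..<length A} - {j}. ?f i)) * Var (A ! j) ^ l"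
    by (simp only: ac_simps)
  have "A ! j \<in> {1..d}" using assms(1,3) nth_mem by blast
  then show ?thesis unfolding Teq by (rule inJ_Var)
qed

lemma sum_list_le: "(\<forall>x\<in>set xs. x < l) \<Longrightarrow> sum_list xs \<le> length xs * (l - 1)"
  by (induction xs) auto



lemma eps_prefix: "(\<And>i. i < j \<Longrightarrow> \<gamma> ! i = \<alpha> ! i) \<Longrightarrow> eps \<gamma> j = eps \<alpha> j"
  unfolding eps_def by (rule prod.cong) auto

lemma eps_shift:
  assumes "\<And>i. i < n \<Longrightarrow> \<gamma> ! i = \<alpha> ! i" "\<And>i. i < j \<Longrightarrow> \<gamma> ! (n + i) = \<beta> ! i"
  shows "eps \<gamma> (n + j) = (eps \<alpha> n * eps \<beta> j :: 'a::comm_ring_1)"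
  unfolding eps_def prod_lessThan_add using assms
  by (intro arg_cong2[where f="(*)"] prod.cong) auto

lemma T_merge:
  fixes rs0 ts1 As Bs :: "nat list"
  assumes len: "length rs0 = length As" "length ts1 = length Bs"
    and g1: "\<And>i. i < length As \<Longrightarrow> \<gamma> ! i = \<alpha> ! i"
    and g2: "\<And>i. i < length Bs \<Longrightarrow> \<gamma> ! (length As + i) = \<beta> ! i"
  shows "(T \<gamma> (As @ [k] @ Bs) (rs0 @ [x + y] @ ts1) :: 'a::comm_ring_1 mpoly)
       = Poly_Mapping.single 0 (eps \<alpha> (length As) ^ (y + sum_list ts1))
         * T \<alpha> (As @ [k]) (rs0 @ [x]) * T \<beta> (k # Bs) (y # ts1)"
proof -
  define n where "n = length As"
  define m where "m = length Bs"
  define E :: 'a where "E = eps \<alpha> n"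
  let ?S = "\<lambda>c. Poly_Mapping.single 0 c :: 'a mpoly"
  let ?fa = "\<lambda>j. ?S (eps \<alpha> j) * Var (As ! j)"
  let ?fb = "\<lambda>i. ?S (eps \<beta> (Suc i)) * Var (Bs ! i)"
  have epsg1: "eps \<gamma> j = eps \<alpha> j" if "j \<le> n" for j
    using that g1 by (intro eps_prefix) (auto simp: n_def)
  have epsg2: "eps \<gamma> (Suc n + i) = E * eps \<beta> (Suc i)" if "i < m" for i
  proof -
    have "eps \<gamma> (n + Suc i) = (eps \<alpha> n * eps \<beta> (Suc i) :: 'a)"
      using that g1 g2 by (intro eps_shift) (auto simp: n_def m_def)
    then show ?thesis by (simp add: E_def)
  qed
  have epsg2': "eps \<gamma> (Suc (length As + i)) = E * eps \<beta> (Suc i)" if "i < m" for i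
    using epsg2[OF that] by (simp add: n_def)
  have L: "T \<gamma> (As @ [k] @ Bs) (rs0 @ [x + y] @ ts1) =
     (\<Prod>j<n. ?fa j ^ (rs0 ! j)) * (?S E * Var k) ^ (x + y)
      * (\<Prod>i<m. (?S E * ?fb i) ^ (ts1 ! i))"
  proof -
    have "length (As @ [k] @ Bs) = Suc n + m" by (simp add: n_def m_def)
    then have "T \<gamma> (As @ [k] @ Bs) (rs0 @ [x + y] @ ts1) =
      (\<Prod>j<Suc n. (?S (eps \<gamma> j) * Var ((As @ [k] @ Bs) ! j)) ^ ((rs0 @ [x + y] @ ts1) ! j))
      * (\<Prod>i<m. (?S (eps \<gamma> (Suc n + i)) * Var ((As @ [k] @ Bs) ! (Suc n + i))) ^ ((rs0 @ [x + y] @ ts1) ! (Suc n + i)))"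
      unfolding T_def by (simp only: prod_lessThan_add)
    also have "(\<Prod>j<Suc n. (?S (eps \<gamma> j) * Var ((As @ [k] @ Bs) ! j)) ^ ((rs0 @ [x + y] @ ts1) ! j))
       = (\<Prod>j<n. ?fa j ^ (rs0 ! j)) * (?S E * Var k) ^ (x + y)"
      unfolding prod.lessThan_Suc
      using len by (intro arg_cong2[where f="(*)"] prod.cong)
        (auto simp: epsg1 E_def n_def nth_append)
    also have "(\<Prod>i<m. (?S (eps \<gamma> (Suc n + i)) * Var ((As @ [k] @ Bs) ! (Suc n + i))) ^ ((rs0 @ [x + y] @ ts1) ! (Suc n + i)))
       = (\<Prod>i<m. (?S E * ?fb i) ^ (ts1 ! i))"
      using len by (intro prod.cong) (auto simp: epsg2' n_def nth_append single0_mult[symmetric] mult.assoc)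
    finally show ?thesis .
  qed
  have Ta: "T \<alpha> (As @ [k]) (rs0 @ [x]) = (\<Prod>j<n. ?fa j ^ (rs0 ! j)) * (?S E * Var k) ^ x"
    unfolding T_def using len
    by (simp add: n_def E_def nth_append)
  have Tb: "T \<beta> (k # Bs) (y # ts1) = Var k ^ y * (\<Prod>i<m. ?fb i ^ (ts1 ! i))"
    unfolding T_def length_Cons prod.lessThan_Suc_shift by (simp add: m_def eps_def del: prod.lessThan_Suc)
  have P: "(\<Prod>i<m. (?S E * ?fb i) ^ (ts1 ! i)) = ?S (E ^ sum_list ts1) * (\<Prod>i<m. ?fb i ^ (ts1 ! i))"
  proof -
    have "(\<Prod>i<m. (?S E * ?fb i) ^ (ts1 ! i)) = (\<Prod>i<m. ?S E ^ (ts1 ! i)) * (\<Prod>i<m. ?fb i ^ (ts1 ! i))"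
      by (simp add: power_mult_distrib prod.distrib)
    also have "(\<Prod>i<m. ?S E ^ (ts1 ! i)) = ?S E ^ (\<Sum>i<m. ts1 ! i)"
      by (simp add: power_sum)
    also have "(\<Sum>i<m. ts1 ! i) = sum_list ts1"
      using len by (simp add: sum_list_sum_nth m_def atLeast0LessThan)
    finally show ?thesis by (simp add: single0_power)
  qed
  show ?thesis
    unfolding L Ta Tb P E_def[symmetric] n_def[symmetric]
    by (simp add: power_mult_distrib power_add single0_power[symmetric] single0_mult[symmetric] ac_simps)
qed



lemma hpoly_T: "hpoly l \<alpha> r A = sum (T \<alpha> A) {rs. length rs = length A \<and> sum_list rs = (length A - 1) * (l - 1) + r}"
  unfolding hpoly_def T_def by simp

lemma finite_S: "finite {rs :: nat list. length rs = L \<and> sum_list rs = N}"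
proof (rule finite_subset)
  show "{rs :: nat list. length rs = L \<and> sum_list rs = N} \<subseteq> {xs. set xs \<subseteq> {0..N} \<and> length xs = L}"
    by (auto simp: member_le_sum_list)
  show "finite {xs. set xs \<subseteq> {0..N} \<and> length xs = L}" by (rule finite_lists_length_eq) simp
qed

lemma eps_last:
  assumes "length \<alpha> = Suc n" "even (sum_list \<alpha>)"
  shows "eps \<alpha> n = ((-1) ^ (last \<alpha>) :: 'a::comm_ring_1)"
proof -
  have "eps \<alpha> (Suc n) = ((-1) ^ (\<Sum>k<Suc n. \<alpha> ! k) :: 'a)"
    unfolding eps_def by (simp only: power_sum)
  also have "(\<Sum>k<Suc n. \<alpha> ! k) = sum_list \<alpha>"
    using assms(1) by (simp add: sum_list_sum_nth atLeast0LessThan)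
  finally have "eps \<alpha> n * (-1) ^ (\<alpha> ! n) = (1 :: 'a)"
    using assms(2) unfolding eps_def by simp
  then have "eps \<alpha> n * (-1) ^ (\<alpha> ! n) * (-1) ^ (\<alpha> ! n) = ((-1) ^ (\<alpha> ! n) :: 'a)" by simp
  then have "eps \<alpha> n = ((-1) ^ (\<alpha> ! n) :: 'a)"
    by (simp add: mult.assoc power_add[symmetric] flip: power_mult_distrib)
  moreover have "last \<alpha> = \<alpha> ! n" using assms(1) by (cases \<alpha> rule: rev_cases) (auto simp: nth_append)
  ultimately show ?thesis by simp
qed



theorem mainTheorem13:
  fixes l d :: nat and As Bs :: "nat list" and k :: nat and \<alpha> \<beta> :: "nat list" and r s :: nat
  assumes "l \<ge> 1" and "d \<ge> 1"
    and "distinct (As @ [k])" and "set (As @ [k]) \<subseteq> {1..d}"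
    and "distinct (k # Bs)" and "set (k # Bs) \<subseteq> {1..d}"
    and "set (As @ [k]) \<inter> set (k # Bs) = {k}"
    and "Z2ev (length As + 1) \<alpha>" and "Z2ev (length Bs + 1) \<beta>"
  shows "trunc_eq l d
           (hpoly l \<alpha> r (As @ [k]) * hpoly l \<beta> s (k # Bs) :: 'a::comm_ring_1 mpoly)
           (Poly_Mapping.single 0 ((-1) ^ (last \<alpha> * ((length Bs) * (l - 1) + s)))
              * hpoly l (butlast \<alpha> @ butlast \<beta> @ [(last \<beta> + last \<alpha>) mod 2]) (r + s) (As @ [k] @ Bs))"
proof -
  define n where "n = length As"
  define m where "m = length Bs"
  define NA where "NA = n * (l - 1) + r"
  define NB where "NB = m * (l - 1) + s"
  define \<gamma> where "\<gamma> = butlast \<alpha> @ butlast \<beta> @ [(last \<beta> + last \<alpha>) mod 2]"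
  define \<sigma> :: 'a where "\<sigma> = (-1) ^ (last \<alpha> * NB)"
  define SA where "SA = {rs :: nat list. length rs = Suc n \<and> sum_list rs = NA}"
  define SB where "SB = {rs :: nat list. length rs = Suc m \<and> sum_list rs = NB}"
  define SC where "SC = {rs :: nat list. length rs = Suc (n + m) \<and> sum_list rs = NA + NB}"
  define \<phi> where "\<phi> = (\<lambda>p :: nat list \<times> nat list. butlast (fst p) @ [last (fst p) + hd (snd p)] @ tl (snd p))"
  define \<psi> where "\<psi> = (\<lambda>u :: nat list. (take n u @ [NA - sum_list (take n u)], (NB - sum_list (drop (Suc n) u)) # drop (Suc n) u))"
  let ?S = "\<lambda>c. Poly_Mapping.single 0 c :: 'a mpoly"
  let ?A = "As @ [k]" and ?B = "k # Bs" and ?C = "As @ [k] @ Bs"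
  have la: "length \<alpha> = Suc n" and ea: "even (sum_list \<alpha>)"
    using assms(8) by (auto simp: Z2ev_def Z2vec_def n_def)
  have lb: "length \<beta> = Suc m"
    using assms(9) by (auto simp: Z2ev_def Z2vec_def m_def)
  have hA: "hpoly l \<alpha> r ?A = sum (T \<alpha> ?A) SA"
    unfolding hpoly_T SA_def NA_def n_def by simp
  have hB: "hpoly l \<beta> s ?B = sum (T \<beta> ?B) SB"
    unfolding hpoly_T SB_def NB_def m_def by simp
  have hC: "hpoly l \<gamma> (r + s) ?C = sum (T \<gamma> ?C) SC"
    unfolding hpoly_T SC_def NA_def NB_def n_def m_def by (simp add: algebra_simps)
  have finA: "finite SA" and finB: "finite SB" and finC: "finite SC"
    unfolding SA_def SB_def SC_def by (rule finite_S)+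
  have g1: "\<gamma> ! i = \<alpha> ! i" if "i < length As" for i
    using that la by (simp add: \<gamma>_def nth_append nth_butlast n_def)
  have g2: "\<gamma> ! (length As + i) = \<beta> ! i" if "i < length Bs" for i
    using that la lb by (simp add: \<gamma>_def nth_append nth_butlast n_def m_def)
  have E: "eps \<alpha> n = ((-1) ^ (last \<alpha>) :: 'a)" by (rule eps_last[OF la ea])
  have splitA: "rs = butlast rs @ [last rs] \<and> sum_list rs = sum_list (butlast rs) + last rs \<and> length (butlast rs) = n"
    if "rs \<in> SA" for rs
  proof -
    have "rs \<noteq> []" using that by (auto simp: SA_def)
    then have "rs = butlast rs @ [last rs]" by simp
    moreover from this have "sum_list rs = sum_list (butlast rs) + last rs"
      by (metis add.commute sum_list.Cons sum_list.Nil sum_list_append add_0_right add.left_neutral)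
    ultimately show ?thesis using that by (auto simp: SA_def)
  qed
  have splitB: "ts = hd ts # tl ts \<and> sum_list ts = hd ts + sum_list (tl ts) \<and> length (tl ts) = m"
    if "ts \<in> SB" for ts
  proof -
    have "ts \<noteq> []" using that by (auto simp: SB_def)
    then show ?thesis using that by (cases ts) (auto simp: SB_def)
  qed
  have key: "T \<alpha> ?A (fst p) * T \<beta> ?B (snd p) = ?S \<sigma> * T \<gamma> ?C (\<phi> p)" if "p \<in> SA \<times> SB" for p
  proof -
    obtain rs ts where p: "p = (rs, ts)" by (cases p)
    have rs: "rs \<in> SA" and ts: "ts \<in> SB" using that p by auto
    have "T \<gamma> ?C (\<phi> p) = T \<gamma> (As @ [k] @ Bs) (butlast rs @ [last rs + hd ts] @ tl ts)"
      by (simp add: \<phi>_def p)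
    also have "\<dots> = ?S (eps \<alpha> (length As) ^ (hd ts + sum_list (tl ts))) * T \<alpha> (As @ [k]) (butlast rs @ [last rs]) * T \<beta> (k # Bs) (hd ts # tl ts)"
      using splitA[OF rs] splitB[OF ts] g1 g2 by (intro T_merge) (auto simp: n_def m_def)
    also have "\<dots> = ?S \<sigma> * T \<alpha> ?A rs * T \<beta> ?B ts"
      using splitA[OF rs] splitB[OF ts] ts
      by (simp add: E n_def[symmetric] \<sigma>_def SB_def power_mult)
    finally have "T \<gamma> ?C (\<phi> p) = ?S \<sigma> * T \<alpha> ?A rs * T \<beta> ?B ts" .
    then have "?S \<sigma> * T \<gamma> ?C (\<phi> p) = ?S (\<sigma> * \<sigma>) * (T \<alpha> ?A rs * T \<beta> ?B ts)"
      by (simp add: single0_mult[symmetric] mult.assoc)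
    moreover have "\<sigma> * \<sigma> = 1" unfolding \<sigma>_def by (simp flip: power_add add: power_mult_distrib[symmetric])
    ultimately show ?thesis by (simp add: p)
  qed
  have psi_phi: "\<psi> (\<phi> p) = p" if "p \<in> SA \<times> SB" for p
  proof -
    obtain rs ts where p: "p = (rs, ts)" by (cases p)
    have rs: "rs \<in> SA" and ts: "ts \<in> SB" using that p by auto
    note a = splitA[OF rs] and b = splitB[OF ts]
    have "sum_list (butlast rs) + last rs = NA" using a rs by (simp add: SA_def)
    then have "NA - sum_list (butlast rs) = last rs" by linarith
    moreover have "hd ts + sum_list (tl ts) = NB" using b ts by (simp add: SB_def)
    then have "NB - sum_list (tl ts) = hd ts" by linarith
    ultimately show ?thesis using a b
      by (simp add: \<psi>_def \<phi>_def p)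
  qed
  have inj: "inj_on \<phi> (SA \<times> SB)"
    by (rule inj_on_inverseI[where g = \<psi>]) (rule psi_phi)
  have imsub: "\<phi> ` (SA \<times> SB) \<subseteq> SC"
  proof
    fix u assume "u \<in> \<phi> ` (SA \<times> SB)"
    then obtain rs ts where rs: "rs \<in> SA" and ts: "ts \<in> SB" and u: "u = \<phi> (rs, ts)" by auto
    note a = splitA[OF rs] and b = splitB[OF ts]
    have "sum_list u = sum_list rs + sum_list ts" using a b by (simp add: u \<phi>_def)
    then show "u \<in> SC" using a b rs ts by (simp add: SC_def SA_def SB_def u \<phi>_def)
  qed
  have bad: "\<exists>j<length u. u ! j \<ge> l" if "u \<in> SC - \<phi> ` (SA \<times> SB)" for u
  proof (rule ccontr)
    assume "\<not> ?thesis"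
    then have small: "\<forall>x\<in>set u. x < l" by (auto simp: in_set_conv_nth not_le)
    have u: "u \<in> SC" using that by auto
    have lu: "length u = Suc (n + m)" and su: "sum_list u = NA + NB" using u by (auto simp: SC_def)
    define st where "st = sum_list (take n u)"
    define sd where "sd = sum_list (drop (Suc n) u)"
    have st: "st \<le> NA"
    proof -
      have "st \<le> length (take n u) * (l - 1)" unfolding st_def
        by (rule sum_list_le) (use small in \<open>auto dest: in_set_takeD\<close>)
      then show ?thesis using lu by (simp add: NA_def)
    qed
    have sd: "sd \<le> NB"
    proof -
      have "sd \<le> length (drop (Suc n) u) * (l - 1)" unfolding sd_def
        by (rule sum_list_le) (use small in \<open>auto dest: in_set_dropD\<close>)
      then show ?thesis using lu by (simp add: NB_def)
    qed
    have ud: "u = take n u @ [u ! n] @ drop (Suc n) u"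
      using lu by (simp add: id_take_nth_drop[symmetric])
    then have "sum_list u = st + u ! n + sd" unfolding st_def sd_def
      by (metis sum_list_append sum_list.Cons sum_list.Nil add_0_right add.assoc)
    then have mid: "NA - st + (NB - sd) = u ! n" using su st sd by simp
    have "\<psi> u \<in> SA \<times> SB"
      using st sd lu by (simp add: \<psi>_def SA_def SB_def st_def[symmetric] sd_def[symmetric] min_def)
    moreover have "\<phi> (\<psi> u) = u"
      using mid ud by (simp add: \<phi>_def \<psi>_def st_def[symmetric] sd_def[symmetric])
    ultimately have "u \<in> \<phi> ` (SA \<times> SB)" by (metis image_eqI)
    then show False using that by simp
  qed
  have lhs: "hpoly l \<alpha> r ?A * hpoly l \<beta> s ?B = ?S \<sigma> * sum (T \<gamma> ?C) (\<phi> ` (SA \<times> SB))"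
  proof -
    have "hpoly l \<alpha> r ?A * hpoly l \<beta> s ?B = (\<Sum>p\<in>SA \<times> SB. T \<alpha> ?A (fst p) * T \<beta> ?B (snd p))"
      unfolding hA hB sum_product sum.cartesian_product by (simp add: case_prod_beta)
    also have "\<dots> = (\<Sum>p\<in>SA \<times> SB. ?S \<sigma> * T \<gamma> ?C (\<phi> p))"
      by (rule sum.cong) (auto simp: key)
    also have "\<dots> = ?S \<sigma> * sum (T \<gamma> ?C) (\<phi> ` (SA \<times> SB))"
      by (simp add: sum_distrib_left sum.reindex[OF inj])
    finally show ?thesis .
  qed
  have sC: "sum (T \<gamma> ?C) SC = sum (T \<gamma> ?C) (SC - \<phi> ` (SA \<times> SB)) + sum (T \<gamma> ?C) (\<phi> ` (SA \<times> SB))"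
    by (rule sum.subset_diff[OF imsub finC])
  have diffJ: "inJ l d (- ?S \<sigma> * sum (T \<gamma> ?C) (SC - \<phi> ` (SA \<times> SB)))"
  proof (rule inJ_mult, rule inJ_sum)
    show "finite (SC - \<phi> ` (SA \<times> SB))" using finC by simp
    fix u assume u: "u \<in> SC - \<phi> ` (SA \<times> SB)"
    then obtain j where j: "j < length u" "u ! j \<ge> l" using bad by blast
    have "length u = length ?C" using u by (simp add: SC_def n_def m_def)
    moreover have "set ?C \<subseteq> {1..d}" using assms(4,6) by auto
    ultimately show "inJ l d (T \<gamma> ?C u)" using j by (intro T_inJ[of j]) auto
  qed
  have "hpoly l \<alpha> r ?A * hpoly l \<beta> s ?B - ?S \<sigma> * hpoly l \<gamma> (r + s) ?C
        = - ?S \<sigma> * sum (T \<gamma> ?C) (SC - \<phi> ` (SA \<times> SB))"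
    unfolding lhs hC sC by (simp add: algebra_simps)
  moreover have "\<sigma> = (-1) ^ (last \<alpha> * ((length Bs) * (l - 1) + s))"
    by (simp add: \<sigma>_def NB_def m_def)
  ultimately show ?thesis using diffJ unfolding trunc_eq_def inJ_def \<gamma>_def by simp
qed

end
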